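(* Let $\varrho>0$ and $k$ a positive integer, and let \[\gamma(k,\varrho)=\frac{1}{\Gamma(1+\varrho^2)^{k^2}}\int_{\mathcal{P}_{k,\varrho}}\prod_{i=1}^k\Big(1-\sum_{j=1}^kx_{ij}^{1/\varrho^2}\Big)\prod_{j=1}^k\Big(1-\sum_{i=1}^kx_{ij}^{1/\varrho^2}\Big)d\underline{x},\] where $\mathcal{P}_{k,\varrho}=\{(x_{ij})\in\mathbb{R}^{k^2}: x_{ij}\ge0,\ \sum_{i}x_{ij}^{1/\varrho^2}\le1\ \forall j,\ \sum_jx_{ij}^{1/\varrho^2}\le1\ \forall i\}$. Then \[\Gamma(1+\varrho^2)^{-k^2}\,2^{-2k-k^2\varrho^2}\,k^{-k^2\varrho^2}\le\gamma(k,\varrho)\le\Gamma(1+k\varrho^2)^{-k}.\] In particular, if $\varrho$ is bounded and $k\to\infty$, then $\log\gamma(k,\varrho)=-k^2\varrho^2\log k+O(k^2)$.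
   Context: $d\underline{x}$ is Lebesgue measure on $\mathbb{R}^{k^2}$. *)

theory Defs
  imports "HOL-Analysis.Analysis"
begin

text \<open>Points of R^(k^2) are functions on the index set {0..<k} x {0..<k}
  (extensional outside it); Lebesgue measure is the k^2-fold product of lborel.\<close>

definition mat_space :: "nat \<Rightarrow> (nat \<times> nat \<Rightarrow> real) measure" where
  "mat_space k = PiM ({..<k} \<times> {..<k}) (\<lambda>_. lborel)"

definition P_set :: "nat \<Rightarrow> real \<Rightarrow> (nat \<times> nat \<Rightarrow> real) set" where
  "P_set k \<rho> = {x \<in> ({..<k} \<times> {..<k}) \<rightarrow>\<^sub>E UNIV.
      (\<forall>i<k. \<forall>j<k. x (i, j) \<ge> 0) \<and>
      (\<forall>j<k. (\<Sum>i<k. x (i, j) powr (1 / \<rho>\<^sup>2)) \<le> 1) \<and>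
      (\<forall>i<k. (\<Sum>j<k. x (i, j) powr (1 / \<rho>\<^sup>2)) \<le> 1)}"

definition gamma_kr :: "nat \<Rightarrow> real \<Rightarrow> real" where
  "gamma_kr k \<rho> = inverse (Gamma (1 + \<rho>\<^sup>2) ^ (k\<^sup>2)) *
     (LINT x : P_set k \<rho> | mat_space k.
        (\<Prod>i<k. 1 - (\<Sum>j<k. x (i, j) powr (1 / \<rho>\<^sup>2))) *
        (\<Prod>j<k. 1 - (\<Sum>i<k. x (i, j) powr (1 / \<rho>\<^sup>2))))"

end

theory Submission
  imports Defs
begin


lemma gamma_real_open:
  assumes "s > (0::real)"
  shows "((\<lambda>t. t powr (s - 1) / exp t) has_integral Gamma s) {0<..}"
proof -
  have "((\<lambda>t. t powr (s - 1) / exp t) has_integral Gamma s) {0..}"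
    using Gamma_integral_real[OF assms] .
  hence "((\<lambda>t. if t \<in> {0<..} then t powr (s - 1) / exp t else 0) has_integral Gamma s) {0..}"
    by (rule has_integral_spike [of "{0}", rotated 2]) auto
  also have "?this = ?thesis"
    by (subst has_integral_restrict) auto
  finally show ?thesis .
qed

lemma subst_int:
  fixes l r :: real
  assumes l: "l > 0" and r: "r > 0"
  shows "((\<lambda>y. exp (- l * y powr (1/r))) has_integral (l powr (-r) * Gamma (1 + r))) {0<..}"
proof -
  define g where "g u = (u / l) powr r" for u
  define g' where "g' u = r / l * (u / l) powr (r - 1)" for u
  have der: "(g has_field_derivative g' u) (at u within {0<..})" if "u \<in> {0<..}" for u
  proof -
    have "((\<lambda>u. (u / l) powr r) has_field_derivative (r * (u/l) powr (r - 1) * (1 / l))) (at u)"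
      using that l by (auto intro!: derivative_eq_intros)
    thus ?thesis unfolding g_def g'_def by (auto intro: has_field_derivative_at_within simp: field_simps)
  qed
  have ginv: "g u powr (1/r) = u / l" if "u > 0" for u
    using that l r by (simp add: g_def powr_powr)
  have inj: "inj_on g {0<..}"
  proof (rule inj_onI)
    fix a b assume "a \<in> {0<..}" "b \<in> {0<..}" "g a = g b"
    hence "a / l = b / l" using ginv by (metis greaterThan_iff)
    thus "a = b" using l by simp
  qed
  have img: "g ` {0<..} = {0<..}"
  proof
    show "g ` {0<..} \<subseteq> {0<..}" using l by (auto simp: g_def)
    show "{0<..} \<subseteq> g ` {0<..}"
    proof
      fix y :: real assume y: "y \<in> {0<..}"
      have "g (l * y powr (1/r)) = y" using y l r by (simp add: g_def powr_powr)
      moreover have "l * y powr (1/r) \<in> {0<..}" using y l by simp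
      ultimately show "y \<in> g ` {0<..}" by (metis imageI)
    qed
  qed
  have eq: "\<bar>g' u\<bar> * exp (- l * g u powr (1/r)) = (r * l powr (-r)) * (u powr (r - 1) / exp u)" if "u > 0" for u
    using that l r by (simp add: ginv g'_def abs_mult powr_divide powr_diff powr_minus field_simps exp_minus)
  have "((\<lambda>u. (r * l powr (-r)) * (u powr (r - 1) / exp u)) has_integral (r * l powr (-r)) * Gamma r) {0<..}"
    using has_integral_mult_right[OF gamma_real_open[OF r]] by simp
  hence A: "((\<lambda>u. \<bar>g' u\<bar> * exp (- l * g u powr (1/r))) has_integral (r * l powr (-r)) * Gamma r) {0<..}"
    by (rule has_integral_eq[rotated]) (metis eq greaterThan_iff)
  have "(\<lambda>u. \<bar>g' u\<bar> * exp (- l * g u powr (1/r))) absolutely_integrable_on {0<..}"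
    using A by (intro nonnegative_absolutely_integrable_1) auto
  hence "(\<lambda>y. exp (- l * y powr (1/r))) absolutely_integrable_on (g ` {0<..}) \<and>
     integral (g ` {0<..}) (\<lambda>y. exp (- l * y powr (1/r))) = (r * l powr (-r)) * Gamma r"
    using has_absolute_integral_change_of_variables_1'[OF _ der inj, of "\<lambda>y. exp (- l * y powr (1/r))"]
      A by (auto simp: integral_unique)
  moreover have "(r * l powr (-r)) * Gamma r = l powr (-r) * Gamma (1 + r)"
    using Gamma_plus1[of r] r nonpos_Ints_nonpos[of r] by (force simp: add.commute)
  ultimately show ?thesis using img
    by (metis absolutely_integrable_on_def has_integral_integral)
qed

lemma exp_int:
  assumes "c > (0::real)"
  shows "((\<lambda>y. exp (- (y / c))) has_integral c) {0<..}"
proof -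
  have H: "((\<lambda>y. exp (- (1/c) * y powr (1/1))) has_integral ((1/c) powr (-1) * Gamma (1 + 1))) {0<..}"
    by (rule subst_int) (use assms in auto)
  have val: "(1/c) powr (-1) * Gamma (1 + 1) = c"
    using assms by (simp add: powr_minus Gamma_fact[of 1, simplified] powr_divide)
  from H have "((\<lambda>y. exp (- (1/c) * y powr (1/1))) has_integral c) {0<..}" unfolding val .
  thus ?thesis by (rule has_integral_eq[rotated]) simp
qed

lemma Gamma_upper:
  assumes t: "t \<ge> (0::real)"
  shows "Gamma (1 + t) \<le> (t + 1) powr (t + 1) * exp (- t)"
proof -
  have G: "((\<lambda>u. u powr t / exp u) has_integral Gamma (1 + t)) {0<..}"
    using gamma_real_open[of "1 + t"] t by simp
  have E: "((\<lambda>u. ((t + 1) powr t * exp (- t)) * exp (- (u / (t + 1)))) has_integral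
            ((t + 1) powr t * exp (- t)) * (t + 1)) {0<..}"
    using has_integral_mult_right[OF exp_int[of "t+1"]] t by simp
  have pt: "u powr t / exp u \<le> ((t + 1) powr t * exp (- t)) * exp (- (u / (t + 1)))" if u: "u > 0" for u
  proof -
    have lnb: "ln (u / (t + 1)) \<le> u / (t + 1) - 1"
      using u t by (intro ln_le_minus_one) auto
    have "t * ln (u / (t + 1)) \<le> t * (u / (t + 1) - 1)"
      using lnb t by (simp add: mult_left_mono)
    hence "t * ln u - u \<le> t * ln (t + 1) - t - u / (t + 1)"
      using u t by (simp add: ln_div field_simps)
    hence "exp (t * ln u - u) \<le> exp (t * ln (t + 1) - t - u / (t + 1))" by simp
    moreover have "u powr t / exp u = exp (t * ln u - u)"
      using u by (simp add: powr_def exp_diff)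
    moreover have "((t + 1) powr t * exp (- t)) * exp (- (u / (t + 1))) = exp (t * ln (t + 1) - t - u / (t + 1))"
      using t by (simp add: powr_def exp_diff exp_minus divide_inverse)
    ultimately show ?thesis by simp
  qed
  have "Gamma (1 + t) \<le> ((t + 1) powr t * exp (- t)) * (t + 1)"
    by (rule has_integral_le[OF G E]) (use pt in auto)
  also have "\<dots> = (t + 1) powr (t + 1) * exp (- t)"
    using t by (simp add: powr_add)
  finally show ?thesis .
qed

lemma Gamma_lower:
  assumes t: "t \<ge> (0::real)"
  shows "t powr t * exp (- t) \<le> Gamma (1 + t)"
proof -
  have G: "((\<lambda>u. u powr t / exp u) has_integral Gamma (1 + t)) {0<..}"
    using gamma_real_open[of "1 + t"] t by simp
  define g where "g u = u + t" for u
  have der: "(g has_field_derivative 1) (at u within {0<..})" for u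
    unfolding g_def by (auto intro!: derivative_eq_intros)
  have inj: "inj_on g {0<..}" unfolding g_def inj_on_def by auto
  have img: "g ` {0<..} = {t<..}"
  proof
    show "g ` {0<..} \<subseteq> {t<..}" by (auto simp: g_def)
    show "{t<..} \<subseteq> g ` {0<..}"
    proof
      fix y assume "y \<in> {t<..}"
      hence "y - t \<in> {0<..}" "g (y - t) = y" by (auto simp: g_def)
      thus "y \<in> g ` {0<..}" by (metis imageI)
    qed
  qed
  have E1: "((\<lambda>y::real. exp (- y)) has_integral 1) {0<..}" using exp_int[of 1] by simp
  have A: "((\<lambda>u. \<bar>1\<bar> * ((t powr t / exp (g u)))) has_integral (t powr t * exp (- t))) {0<..}"
    using has_integral_mult_right[OF E1, of "t powr t * exp (- t)"]
    by (rule_tac has_integral_eq[rotated]) (auto simp: g_def exp_add exp_minus field_simps)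
  have "(\<lambda>u. \<bar>1\<bar> * ((t powr t / exp (g u)))) absolutely_integrable_on {0<..}"
    using A by (intro nonnegative_absolutely_integrable_1) auto
  hence "(\<lambda>y. t powr t / exp y) absolutely_integrable_on (g ` {0<..}) \<and>
     integral (g ` {0<..}) (\<lambda>y. t powr t / exp y) = t powr t * exp (- t)"
    using has_absolute_integral_change_of_variables_1'[OF _ der inj, of "\<lambda>y. t powr t / exp y"]
      A by (auto simp: integral_unique)
  hence "((\<lambda>y. t powr t / exp y) has_integral (t powr t * exp (- t))) {t<..}"
    using img by (metis absolutely_integrable_on_def has_integral_integral)
  hence H: "((\<lambda>y. if y \<in> {t<..} then t powr t / exp y else 0) has_integral (t powr t * exp (- t))) {0<..}"
    using t by (subst has_integral_restrict) auto
  show ?thesis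
  proof (rule has_integral_le[OF H G])
    fix u :: real assume u: "u \<in> {0<..}"
    show "(if u \<in> {t<..} then t powr t / exp u else 0) \<le> u powr t / exp u"
      using u t by (auto intro!: divide_right_mono powr_mono2)
  qed
qed


lemma h_int:
  fixes l r :: real
  assumes l: "l > 0" and r: "r > 0"
  shows "(\<integral>\<^sup>+y. ennreal (indicator {0..} y * exp (- l * y powr (1/r))) \<partial>lborel) = ennreal (l powr (-r) * Gamma (1 + r))"
proof -
  have "((\<lambda>y. if y \<in> {0<..} then exp (- l * y powr (1/r)) else 0) has_integral (l powr (-r) * Gamma (1 + r))) {0..}"
    using subst_int[OF l r] by (subst has_integral_restrict) auto
  hence "((\<lambda>y. exp (- l * y powr (1/r))) has_integral (l powr (-r) * Gamma (1 + r))) {0..}"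
    by (rule has_integral_spike [of "{0}", rotated 2]) auto
  hence "integral\<^sup>N lborel (\<lambda>y. indicator {0..} y * exp (- l * y powr (1/r))) = l powr (-r) * Gamma (1 + r)"
    by (rule nn_integral_has_integral_lebesgue[rotated]) simp
  thus ?thesis by simp
qed

lemma space_mat: "space (mat_space k) = ({..<k} \<times> {..<k}) \<rightarrow>\<^sub>E UNIV"
  by (simp add: mat_space_def space_PiM)

lemma comp_meas: "(\<lambda>x. x p) \<in> borel_measurable (mat_space k)"
proof (cases "p \<in> {..<k} \<times> {..<k}")
  case True
  then show ?thesis unfolding mat_space_def using measurable_component_singleton[of p "{..<k} \<times> {..<k}" "\<lambda>_. lborel"] by simp
next
  case False
  have "(\<lambda>x. x p) \<in> borel_measurable (mat_space k) \<longleftrightarrow> (\<lambda>x. undefined::real) \<in> borel_measurable (mat_space k)"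
    using False by (intro Sigma_Algebra.measurable_cong) (rule PiE_arb, auto simp: space_mat)
  then show ?thesis by simp
qed

lemma powr_meas: "(\<lambda>x. x p powr a) \<in> borel_measurable (mat_space k)"
  by (rule powr_real_measurable) (auto intro: comp_meas)

lemma rowsum_meas: "(\<lambda>x. \<Sum>j\<in>J. x (g j) powr a) \<in> borel_measurable (mat_space k)"
  by (rule borel_measurable_sum) (rule powr_meas)

lemma P_meas: "P_set k \<rho> \<in> sets (mat_space k)"
proof -
  have "P_set k \<rho> = {x \<in> space (mat_space k).
      (\<forall>p\<in>{..<k} \<times> {..<k}. 0 \<le> x p) \<and>
      (\<forall>j\<in>{..<k}. (\<Sum>i<k. x (i, j) powr (1 / \<rho>\<^sup>2)) \<le> 1) \<and>
      (\<forall>i\<in>{..<k}. (\<Sum>j<k. x (i, j) powr (1 / \<rho>\<^sup>2)) \<le> 1)}"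
    by (auto simp: P_set_def space_mat)
  also have "\<dots> \<in> sets (mat_space k)"
    by (intro sets.sets_Collect_conj sets.sets_Collect_countable_Ball borel_measurable_le
          borel_measurable_const comp_meas rowsum_meas)
  finally show ?thesis .
qed

definition fint :: "nat \<Rightarrow> real \<Rightarrow> (nat \<times> nat \<Rightarrow> real) \<Rightarrow> real" where
  "fint k \<rho> x = (\<Prod>i<k. 1 - (\<Sum>j<k. x (i, j) powr (1 / \<rho>\<^sup>2))) *
        (\<Prod>j<k. 1 - (\<Sum>i<k. x (i, j) powr (1 / \<rho>\<^sup>2)))"

lemma fint_meas: "fint k \<rho> \<in> borel_measurable (mat_space k)"
  unfolding fint_def
  by (intro borel_measurable_times borel_measurable_prod borel_measurable_diff borel_measurable_const rowsum_meas)

lemma key_exp: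
  fixes l s :: real assumes "l > 0"
  shows "1 - s \<le> exp (l - 1) / l * exp (- l * s)"
proof -
  have "l * (1 - s) \<le> exp (l * (1 - s) - 1)"
    using exp_ge_add_one_self[of "l * (1 - s) - 1"] by simp
  also have "\<dots> = exp (l - 1) * exp (- l * s)"
    by (simp add: exp_add[symmetric] algebra_simps)
  finally show ?thesis using assms by (simp add: field_simps)
qed

lemma fint_upper:
  assumes x: "x \<in> P_set k \<rho>" and l: "l > 0"
  shows "fint k \<rho> x \<le> (exp (l - 1) / l) ^ k *
           (\<Prod>p\<in>{..<k} \<times> {..<k}. exp (- l * x p powr (1 / \<rho>\<^sup>2)))"
proof -
  define s where "s i = (\<Sum>j<k. x (i, j) powr (1 / \<rho>\<^sup>2))" for i
  define c where "c j = (\<Sum>i<k. x (i, j) powr (1 / \<rho>\<^sup>2))" for j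
  have s01: "0 \<le> 1 - s i \<and> 1 - s i \<le> 1" if "i < k" for i
    using x that unfolding P_set_def s_def by (auto intro: sum_nonneg)
  have c01: "0 \<le> 1 - c j \<and> 1 - c j \<le> 1" if "j < k" for j
    using x that unfolding P_set_def c_def by (auto intro: sum_nonneg)
  have R0: "0 \<le> (\<Prod>i<k. 1 - s i)" using s01 by (auto intro: prod_nonneg)
  have C1: "(\<Prod>j<k. 1 - c j) \<le> 1" using c01 by (auto intro: prod_le_1)
  have "fint k \<rho> x = (\<Prod>i<k. 1 - s i) * (\<Prod>j<k. 1 - c j)"
    unfolding fint_def s_def c_def ..
  also have "\<dots> \<le> (\<Prod>i<k. 1 - s i)"
    using R0 C1 by (simp add: mult_left_le)
  also have "\<dots> \<le> (\<Prod>i<k. exp (l - 1) / l * exp (- l * s i))"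
    by (rule prod_mono) (use s01 key_exp[OF l] in auto)
  also have "\<dots> = (exp (l - 1) / l) ^ k * (\<Prod>i<k. exp (- l * s i))"
    by (subst prod.distrib) simp
  also have "(\<Prod>i<k. exp (- l * s i)) = (\<Prod>i<k. \<Prod>j<k. exp (- l * x (i, j) powr (1 / \<rho>\<^sup>2)))"
  proof (rule prod.cong[OF refl])
    fix i
    have "exp (- l * s i) = exp (\<Sum>j<k. - l * x (i, j) powr (1 / \<rho>\<^sup>2))"
      unfolding s_def by (simp add: sum_distrib_left)
    also have "\<dots> = (\<Prod>j<k. exp (- l * x (i, j) powr (1 / \<rho>\<^sup>2)))"
      by (rule exp_sum) simp
    finally show "exp (- l * s i) = (\<Prod>j<k. exp (- l * x (i, j) powr (1 / \<rho>\<^sup>2)))" .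
  qed
  also have "\<dots> = (\<Prod>p\<in>{..<k} \<times> {..<k}. exp (- l * x p powr (1 / \<rho>\<^sup>2)))"
    by (simp add: prod.cartesian_product case_prod_beta)
  finally show ?thesis .
qed

lemma fint_lower:
  assumes x: "x \<in> ({..<k} \<times> {..<k}) \<rightarrow>\<^sub>E {0..(2 * real k) powr (- \<rho>\<^sup>2)}" and rho: "\<rho> > 0"
  shows "x \<in> P_set k \<rho> \<and> (1/2) ^ k * (1/2) ^ k \<le> fint k \<rho> x"
proof -
  have small: "x (i, j) powr (1 / \<rho>\<^sup>2) \<le> 1 / (2 * real k)" "0 \<le> x (i, j)" if "i < k" "j < k" for i j
  proof -
    have "x (i, j) \<in> {0..(2 * real k) powr (- \<rho>\<^sup>2)}" using PiE_mem[OF x, of "(i, j)"] that by simp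
    hence xi: "0 \<le> x (i, j)" "x (i, j) \<le> (2 * real k) powr (- \<rho>\<^sup>2)" by auto
    have "x (i, j) powr (1 / \<rho>\<^sup>2) \<le> ((2 * real k) powr (- \<rho>\<^sup>2)) powr (1 / \<rho>\<^sup>2)"
      using xi rho by (intro powr_mono2) auto
    also have "\<dots> = (2 * real k) powr (- \<rho>\<^sup>2 * (1 / \<rho>\<^sup>2))"
      by (rule powr_powr)
    also have "\<dots> = (2 * real k) powr (- 1)"
      using rho by simp
    also have "\<dots> = 1 / (2 * real k)"
      using that by (simp add: powr_minus_divide)
    finally show "x (i, j) powr (1 / \<rho>\<^sup>2) \<le> 1 / (2 * real k)" .
    show "0 \<le> x (i, j)" by fact
  qed
  have rs: "(\<Sum>j<k. x (i, j) powr (1 / \<rho>\<^sup>2)) \<le> 1/2" if "i < k" for i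
  proof -
    have "(\<Sum>j<k. x (i, j) powr (1 / \<rho>\<^sup>2)) \<le> (\<Sum>j<k. 1 / (2 * real k))"
      by (rule sum_mono) (use small that in auto)
    also have "\<dots> \<le> 1/2" using that by simp
    finally show ?thesis .
  qed
  have cs: "(\<Sum>i<k. x (i, j) powr (1 / \<rho>\<^sup>2)) \<le> 1/2" if "j < k" for j
  proof -
    have "(\<Sum>i<k. x (i, j) powr (1 / \<rho>\<^sup>2)) \<le> (\<Sum>i<k. 1 / (2 * real k))"
      by (rule sum_mono) (use small that in auto)
    also have "\<dots> \<le> 1/2" using that by simp
    finally show ?thesis .
  qed
  have "x \<in> ({..<k} \<times> {..<k}) \<rightarrow>\<^sub>E UNIV"
    using x PiE_mono[of "{..<k} \<times> {..<k}" "\<lambda>_. {0..(2 * real k) powr (- \<rho>\<^sup>2)}" "\<lambda>_. UNIV"] by blast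
  hence "x \<in> P_set k \<rho>"
    unfolding P_set_def mem_Collect_eq
  proof (intro conjI allI impI)
    fix i j assume "i < k" "j < k" thus "0 \<le> x (i, j)" by (rule small(2))
  next
    fix j assume "j < k" thus "(\<Sum>i<k. x (i, j) powr (1 / \<rho>\<^sup>2)) \<le> 1" using cs[of j] by linarith
  next
    fix i assume "i < k" thus "(\<Sum>j<k. x (i, j) powr (1 / \<rho>\<^sup>2)) \<le> 1" using rs[of i] by linarith
  qed
  moreover have "(1/2) ^ k * (1/2) ^ k \<le> fint k \<rho> x"
  proof -
    have "(1/2::real) ^ k = (\<Prod>i<k. 1/2)" by simp
    also have "\<dots> \<le> (\<Prod>i<k. 1 - (\<Sum>j<k. x (i, j) powr (1 / \<rho>\<^sup>2)))"
      by (rule prod_mono) (use rs in auto)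
    finally have A: "(1/2::real) ^ k \<le> (\<Prod>i<k. 1 - (\<Sum>j<k. x (i, j) powr (1 / \<rho>\<^sup>2)))" .
    have "(1/2::real) ^ k = (\<Prod>j<k. 1/2)" by simp
    also have "\<dots> \<le> (\<Prod>j<k. 1 - (\<Sum>i<k. x (i, j) powr (1 / \<rho>\<^sup>2)))"
      by (rule prod_mono) (use cs in auto)
    finally have B: "(1/2::real) ^ k \<le> (\<Prod>j<k. 1 - (\<Sum>i<k. x (i, j) powr (1 / \<rho>\<^sup>2)))" .
    have A0: "0 \<le> (\<Prod>i<k. 1 - (\<Sum>j<k. x (i, j) powr (1 / \<rho>\<^sup>2)))"
      by (rule order_trans[OF _ A]) simp
    show ?thesis unfolding fint_def by (rule mult_mono[OF A B A0]) simp
  qed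
  ultimately show ?thesis by blast
qed

thm fint_lower


lemma psf: "product_sigma_finite (\<lambda>_::nat \<times> nat. lborel)"
  unfolding product_sigma_finite_def by (simp add: lborel.sigma_finite_measure_axioms)

lemma nn_upper:
  assumes rho: "\<rho> > 0" and l: "l > 0"
  shows "(\<integral>\<^sup>+x. ennreal (indicator (P_set k \<rho>) x * fint k \<rho> x) \<partial>mat_space k)
     \<le> ennreal ((exp (l - 1) / l) ^ k * (l powr (- \<rho>\<^sup>2) * Gamma (1 + \<rho>\<^sup>2)) ^ (k\<^sup>2))"
proof -
  interpret product_sigma_finite "\<lambda>_::nat \<times> nat. lborel" by (rule psf)
  define I where "I = {..<k} \<times> {..<k}"
  define C where "C = (exp (l - 1) / l) ^ k"
  define h where "h y = ennreal (indicator {0..} y * exp (- l * y powr (1 / \<rho>\<^sup>2)))" for y :: real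
  have C0: "C \<ge> 0" unfolding C_def using l by simp
  have hm: "h \<in> borel_measurable lborel" unfolding h_def by measurable
  have pt: "ennreal (indicator (P_set k \<rho>) x * fint k \<rho> x) \<le> ennreal C * (\<Prod>p\<in>I. h (x p))" for x
  proof (cases "x \<in> P_set k \<rho>")
    case True
    have nn: "0 \<le> x p" if "p \<in> I" for p using True that unfolding P_set_def I_def by auto
    have "(\<Prod>p\<in>I. h (x p)) = (\<Prod>p\<in>I. ennreal (exp (- l * x p powr (1 / \<rho>\<^sup>2))))"
      unfolding h_def by (rule prod.cong) (use nn in auto)
    also have "\<dots> = ennreal (\<Prod>p\<in>I. exp (- l * x p powr (1 / \<rho>\<^sup>2)))"
      by (rule prod_ennreal) simp
    finally have eq: "(\<Prod>p\<in>I. h (x p)) = ennreal (\<Prod>p\<in>I. exp (- l * x p powr (1 / \<rho>\<^sup>2)))" .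
    have "fint k \<rho> x \<le> C * (\<Prod>p\<in>I. exp (- l * x p powr (1 / \<rho>\<^sup>2)))"
      unfolding C_def I_def by (rule fint_upper[OF True l])
    hence "ennreal (fint k \<rho> x) \<le> ennreal (C * (\<Prod>p\<in>I. exp (- l * x p powr (1 / \<rho>\<^sup>2))))"
      by (rule ennreal_leI)
    also have "\<dots> = ennreal C * (\<Prod>p\<in>I. h (x p))"
      unfolding eq using C0 by (intro ennreal_mult) (auto intro: prod_nonneg)
    finally show ?thesis using True by simp
  next
    case False
    then show ?thesis by simp
  qed
  have "(\<integral>\<^sup>+x. ennreal (indicator (P_set k \<rho>) x * fint k \<rho> x) \<partial>mat_space k)
      \<le> (\<integral>\<^sup>+x. ennreal C * (\<Prod>p\<in>I. h (x p)) \<partial>mat_space k)"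
    by (rule nn_integral_mono) (rule pt)
  also have "\<dots> = ennreal C * (\<integral>\<^sup>+x. (\<Prod>p\<in>I. h (x p)) \<partial>mat_space k)"
    by (rule nn_integral_cmult) (use hm in \<open>simp add: mat_space_def I_def\<close>)
  also have "(\<integral>\<^sup>+x. (\<Prod>p\<in>I. h (x p)) \<partial>mat_space k) = (\<Prod>p\<in>I. integral\<^sup>N lborel h)"
    unfolding mat_space_def I_def by (rule product_nn_integral_prod) (use hm in auto)
  also have "\<dots> = ennreal (l powr (- \<rho>\<^sup>2) * Gamma (1 + \<rho>\<^sup>2)) ^ (k\<^sup>2)"
  proof -
    have "integral\<^sup>N lborel h = ennreal (l powr (- \<rho>\<^sup>2) * Gamma (1 + \<rho>\<^sup>2))"
      unfolding h_def using h_int[OF l, of "\<rho>\<^sup>2"] rho by simp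
    moreover have "card I = k\<^sup>2" unfolding I_def by (simp add: power2_eq_square)
    ultimately show ?thesis by simp
  qed
  also have "ennreal C * \<dots> = ennreal (C * (l powr (- \<rho>\<^sup>2) * Gamma (1 + \<rho>\<^sup>2)) ^ (k\<^sup>2))"
  proof -
    have J0: "0 \<le> l powr (- \<rho>\<^sup>2) * Gamma (1 + \<rho>\<^sup>2)"
      using Gamma_real_pos[of "1 + \<rho>\<^sup>2"] by (simp add: add_pos_nonneg)
    have "ennreal (C * (l powr (- \<rho>\<^sup>2) * Gamma (1 + \<rho>\<^sup>2)) ^ (k\<^sup>2))
        = ennreal C * ennreal ((l powr (- \<rho>\<^sup>2) * Gamma (1 + \<rho>\<^sup>2)) ^ (k\<^sup>2))"
      by (rule ennreal_mult[OF C0 zero_le_power[OF J0]])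
    also have "ennreal ((l powr (- \<rho>\<^sup>2) * Gamma (1 + \<rho>\<^sup>2)) ^ (k\<^sup>2)) = ennreal (l powr (- \<rho>\<^sup>2) * Gamma (1 + \<rho>\<^sup>2)) ^ (k\<^sup>2)"
      by (rule ennreal_power[OF J0, symmetric])
    finally show ?thesis by simp
  qed
  finally show ?thesis unfolding C_def .
qed

lemma nn_lower:
  assumes rho: "\<rho> > 0"
  shows "ennreal ((1/2) ^ k * (1/2) ^ k * ((2 * real k) powr (- \<rho>\<^sup>2)) ^ (k\<^sup>2))
     \<le> (\<integral>\<^sup>+x. ennreal (indicator (P_set k \<rho>) x * fint k \<rho> x) \<partial>mat_space k)"
proof -
  interpret product_sigma_finite "\<lambda>_::nat \<times> nat. lborel" by (rule psf)
  define I where "I = {..<k} \<times> {..<k}"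
  define cc where "cc = (2 * real k) powr (- \<rho>\<^sup>2)"
  define B where "B = I \<rightarrow>\<^sub>E {0..cc}"
  define c2 where "c2 = (1/2::real) ^ k * (1/2) ^ k"
  have cc0: "0 \<le> cc" unfolding cc_def by simp
  have Bs: "B \<in> sets (mat_space k)"
    unfolding B_def mat_space_def I_def by (rule sets_PiM_I_finite) auto
  have eB: "emeasure (mat_space k) B = ennreal cc ^ (k\<^sup>2)"
  proof -
    have "emeasure (mat_space k) B = (\<Prod>p\<in>I. emeasure lborel {0..cc})"
      unfolding B_def mat_space_def I_def by (rule emeasure_PiM) auto
    also have "\<dots> = ennreal cc ^ card I" using cc0 by simp
    also have "card I = k\<^sup>2" unfolding I_def by (simp add: power2_eq_square)
    finally show ?thesis .
  qed
  have pt: "ennreal c2 * indicator B x \<le> ennreal (indicator (P_set k \<rho>) x * fint k \<rho> x)" for x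
  proof (cases "x \<in> B")
    case True
    have "x \<in> P_set k \<rho> \<and> c2 \<le> fint k \<rho> x"
      using fint_lower[of x k \<rho>] True rho unfolding B_def I_def cc_def c2_def by blast
    thus ?thesis using True by (simp add: ennreal_leI)
  next
    case False
    then show ?thesis by simp
  qed
  have "ennreal c2 * emeasure (mat_space k) B = (\<integral>\<^sup>+x. ennreal c2 * indicator B x \<partial>mat_space k)"
    by (rule nn_integral_cmult_indicator[symmetric]) (rule Bs)
  also have "\<dots> \<le> (\<integral>\<^sup>+x. ennreal (indicator (P_set k \<rho>) x * fint k \<rho> x) \<partial>mat_space k)"
    by (rule nn_integral_mono) (rule pt)
  finally have "ennreal c2 * emeasure (mat_space k) B \<le> \<dots>" .
  moreover have "ennreal c2 * emeasure (mat_space k) B = ennreal (c2 * cc ^ (k\<^sup>2))"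
    unfolding eB c2_def using cc0 by (simp add: ennreal_mult ennreal_power)
  ultimately show ?thesis unfolding c2_def cc_def by simp
qed


lemma fint_nonneg:
  assumes x: "x \<in> P_set k \<rho>"
  shows "0 \<le> fint k \<rho> x"
proof -
  have r: "(\<Sum>j<k. x (i, j) powr (1 / \<rho>\<^sup>2)) \<le> 1" if "i < k" for i
    using x that unfolding P_set_def by blast
  have c: "(\<Sum>i<k. x (i, j) powr (1 / \<rho>\<^sup>2)) \<le> 1" if "j < k" for j
    using x that unfolding P_set_def by blast
  show ?thesis unfolding fint_def
  proof (intro mult_nonneg_nonneg prod_nonneg)
    fix i assume "i \<in> {..<k}" thus "0 \<le> 1 - (\<Sum>j<k. x (i, j) powr (1 / \<rho>\<^sup>2))" using r[of i] by simp
  next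
    fix j assume "j \<in> {..<k}" thus "0 \<le> 1 - (\<Sum>i<k. x (i, j) powr (1 / \<rho>\<^sup>2))" using c[of j] by simp
  qed
qed

lemma V_bounds:
  fixes k :: nat
  assumes rho: "\<rho> > 0" and l: "l > 0"
  defines "V \<equiv> (LINT x : P_set k \<rho> | mat_space k. fint k \<rho> x)"
  shows "(1/2) ^ k * (1/2) ^ k * ((2 * real k) powr (- \<rho>\<^sup>2)) ^ (k\<^sup>2) \<le> V"
    and "V \<le> (exp (l - 1) / l) ^ k * (l powr (- \<rho>\<^sup>2) * Gamma (1 + \<rho>\<^sup>2)) ^ (k\<^sup>2)"
proof -
  define N where "N = (\<integral>\<^sup>+x. ennreal (indicator (P_set k \<rho>) x * fint k \<rho> x) \<partial>mat_space k)"
  define U where "U = (exp (l - 1) / l) ^ k * (l powr (- \<rho>\<^sup>2) * Gamma (1 + \<rho>\<^sup>2)) ^ (k\<^sup>2)"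
  define Lo where "Lo = (1/2::real) ^ k * (1/2) ^ k * ((2 * real k) powr (- \<rho>\<^sup>2)) ^ (k\<^sup>2)"
  have U0: "0 \<le> U" unfolding U_def using l Gamma_real_pos[of "1 + \<rho>\<^sup>2"]
    by (intro mult_nonneg_nonneg zero_le_power) (auto simp: add_pos_nonneg less_imp_le)
  have Lo0: "0 \<le> Lo" unfolding Lo_def by simp
  have meas: "(\<lambda>x. indicator (P_set k \<rho>) x * fint k \<rho> x) \<in> borel_measurable (mat_space k)"
    by (intro borel_measurable_times borel_measurable_indicator P_meas fint_meas)
  have nonneg: "0 \<le> indicator (P_set k \<rho>) x * fint k \<rho> x" for x
    by (cases "x \<in> P_set k \<rho>") (auto simp: fint_nonneg)
  have "V = integral\<^sup>L (mat_space k) (\<lambda>x. indicator (P_set k \<rho>) x * fint k \<rho> x)"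
    unfolding V_def set_lebesgue_integral_def by simp
  also have "\<dots> = enn2real N"
    unfolding N_def by (rule integral_eq_nn_integral[OF meas]) (simp add: nonneg)
  finally have VN: "V = enn2real N" .
  have NU: "N \<le> ennreal U" unfolding N_def U_def by (rule nn_upper[OF rho l])
  have LN: "ennreal Lo \<le> N" unfolding N_def Lo_def by (rule nn_lower[OF rho])
  have Nfin: "N < top" using NU by (simp add: le_less_trans)
  have "enn2real N \<le> enn2real (ennreal U)" by (rule enn2real_mono[OF NU]) simp
  thus "V \<le> (exp (l - 1) / l) ^ k * (l powr (- \<rho>\<^sup>2) * Gamma (1 + \<rho>\<^sup>2)) ^ (k\<^sup>2)"
    using U0 VN unfolding U_def by simp
  have "enn2real (ennreal Lo) \<le> enn2real N" by (rule enn2real_mono[OF LN Nfin])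
  thus "(1/2) ^ k * (1/2) ^ k * ((2 * real k) powr (- \<rho>\<^sup>2)) ^ (k\<^sup>2) \<le> V"
    using Lo0 VN unfolding Lo_def by simp
qed

lemma gamma_kr_eq: "gamma_kr k \<rho> = inverse (Gamma (1 + \<rho>\<^sup>2) ^ (k\<^sup>2)) * (LINT x : P_set k \<rho> | mat_space k. fint k \<rho> x)"
  unfolding gamma_kr_def fint_def ..

lemma Lo_eq:
  assumes k: "k \<ge> 1"
  shows "(1/2::real) ^ k * (1/2) ^ k * ((2 * real k) powr (- \<rho>\<^sup>2)) ^ (k\<^sup>2)
    = 2 powr (- (2 * real k + (real k)\<^sup>2 * \<rho>\<^sup>2)) * real k powr (- ((real k)\<^sup>2 * \<rho>\<^sup>2))"
proof -
  define X where "X = (real k)\<^sup>2 * \<rho>\<^sup>2"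
  have k0: "real k > 0" using k by simp
  have "((2 * real k) powr (- \<rho>\<^sup>2)) ^ (k\<^sup>2) = (2 * real k) powr (real (k\<^sup>2) * (- \<rho>\<^sup>2))"
    using k0 by (intro powr_power) simp
  also have "real (k\<^sup>2) * (- \<rho>\<^sup>2) = - X" unfolding X_def by simp
  also have "(2 * real k) powr (- X) = 2 powr (- X) * real k powr (- X)"
    by (rule powr_mult)
  finally have A: "((2 * real k) powr (- \<rho>\<^sup>2)) ^ (k\<^sup>2) = 2 powr (- X) * real k powr (- X)" .
  have B: "(1/2::real) ^ k * (1/2) ^ k = 2 powr (- (2 * real k))"
  proof -
    have "(2::real) powr (real (2 * k)) = 2 ^ (2 * k)" by (rule powr_realpow) simp
    hence B1: "(2::real) powr (- (2 * real k)) = inverse (2 ^ (2 * k))"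
      by (simp only: powr_minus of_nat_mult of_nat_numeral)
    have h: "(1/2::real) = inverse 2" by simp
    have "(inverse 2::real) ^ k * (inverse 2) ^ k = (inverse 2) ^ (k + k)" by (rule power_add[symmetric])
    also have "\<dots> = inverse (2 ^ (k + k))" by (rule power_inverse)
    also have "k + k = 2 * k" by simp
    finally show ?thesis unfolding h B1 .
  qed
  have "2 powr (- (2 * real k)) * (2 powr (- X) * real k powr (- X)) = (2 powr (- (2 * real k)) * 2 powr (- X)) * real k powr (- X)"
    by (rule mult.assoc[symmetric])
  also have "2 powr (- (2 * real k)) * 2 powr (- X) = (2::real) powr (- (2 * real k) + - X)"
    by (rule powr_add[symmetric])
  also have "- (2 * real k) + - X = - (2 * real k + X)" by simp
  finally show ?thesis unfolding A B X_def .
qed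

lemma upper_final:
  fixes k :: nat
  assumes rho: "\<rho> > 0"
  defines "t \<equiv> real k * \<rho>\<^sup>2"
  shows "inverse (Gamma (1 + \<rho>\<^sup>2) ^ (k\<^sup>2)) * ((exp ((1 + t) - 1) / (1 + t)) ^ k * ((1 + t) powr (- \<rho>\<^sup>2) * Gamma (1 + \<rho>\<^sup>2)) ^ (k\<^sup>2))
     \<le> inverse (Gamma (1 + t) ^ k)"
proof -
  have t0: "t \<ge> 0" unfolding t_def by simp
  define G where "G = Gamma (1 + \<rho>\<^sup>2)"
  define A where "A = (1 + t) powr (- \<rho>\<^sup>2)"
  define P where "P = (1 + t) powr (t + 1)"
  have P0: "P > 0" unfolding P_def using t0 by simp
  have G0: "G > 0" unfolding G_def by (rule Gamma_real_pos) (simp add: add_pos_nonneg)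
  have Gt: "Gamma (1 + t) > 0" by (rule Gamma_real_pos) (use t0 in simp)
  have Gn: "G ^ (k\<^sup>2) \<noteq> 0" using G0 by simp
  have "inverse (G ^ (k\<^sup>2)) * ((exp ((1 + t) - 1) / (1 + t)) ^ k * (A * G) ^ (k\<^sup>2))
      = (exp t / (1 + t)) ^ k * A ^ (k\<^sup>2) * (inverse (G ^ (k\<^sup>2)) * G ^ (k\<^sup>2))"
    by (simp add: power_mult_distrib)
  also have "\<dots> = (exp t / (1 + t)) ^ k * A ^ (k\<^sup>2)"
    using Gn by simp
  also have "A ^ (k\<^sup>2) = ((1 + t) powr (- t)) ^ k"
  proof -
    have "A ^ (k\<^sup>2) = (1 + t) powr (real (k\<^sup>2) * (- \<rho>\<^sup>2))"
      unfolding A_def using t0 by (simp add: powr_power)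
    also have "\<dots> = (1 + t) powr (real k * (- t))"
      unfolding t_def by (simp add: power2_eq_square algebra_simps)
    also have "\<dots> = ((1 + t) powr (- t)) ^ k"
      using t0 by (simp add: powr_power)
    finally show ?thesis .
  qed
  also have "(exp t / (1 + t)) ^ k * ((1 + t) powr (- t)) ^ k = (exp t * inverse P) ^ k"
  proof -
    have "(1 + t) powr (- t) / (1 + t) = inverse P"
      unfolding P_def using t0 by (simp add: powr_add powr_minus divide_inverse)
    hence "exp t / (1 + t) * (1 + t) powr (- t) = exp t * inverse P"
      by (metis times_divide_eq_left times_divide_eq_right mult.commute)
    thus ?thesis by (metis power_mult_distrib)
  qed
  also have "\<dots> \<le> (inverse (Gamma (1 + t))) ^ k"
  proof (rule power_mono)
    show "0 \<le> exp t * inverse P" using P0 by simp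
    have "Gamma (1 + t) \<le> P * exp (- t)" unfolding P_def using Gamma_upper[OF t0] by (simp add: add.commute)
    hence "Gamma (1 + t) * (exp t * inverse P) \<le> (P * exp (- t)) * (exp t * inverse P)"
      by (rule mult_right_mono) (use P0 in simp)
    also have "(P * exp (- t)) * (exp t * inverse P) = 1"
      using P0 by (simp add: exp_minus field_simps)
    finally have "Gamma (1 + t) * (exp t * inverse P) \<le> 1" .
    thus "exp t * inverse P \<le> inverse (Gamma (1 + t))"
      using Gt by (subst inverse_eq_divide, subst pos_le_divide_eq) (simp_all add: mult.commute)
  qed
  also have "\<dots> = inverse (Gamma (1 + t) ^ k)" by (simp add: power_inverse)
  finally show ?thesis unfolding G_def A_def by simp
qed


lemma part1:
  fixes k :: nat and \<rho> :: real
  assumes rho: "\<rho> > 0" and k: "k \<ge> 1"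
  shows "inverse (Gamma (1 + \<rho>\<^sup>2) ^ (k\<^sup>2)) * 2 powr (- (2 * real k + (real k)\<^sup>2 * \<rho>\<^sup>2))
              * real k powr (- ((real k)\<^sup>2 * \<rho>\<^sup>2)) \<le> gamma_kr k \<rho>
          \<and> gamma_kr k \<rho> \<le> inverse (Gamma (1 + real k * \<rho>\<^sup>2) ^ k)"
proof
  define V where "V = (LINT x : P_set k \<rho> | mat_space k. fint k \<rho> x)"
  define t where "t = real k * \<rho>\<^sup>2"
  define iG where "iG = inverse (Gamma (1 + \<rho>\<^sup>2) ^ (k\<^sup>2))"
  have G0: "Gamma (1 + \<rho>\<^sup>2) > 0" by (rule Gamma_real_pos) (simp add: add_pos_nonneg)
  have iG0: "iG \<ge> 0" unfolding iG_def using G0 by simp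
  have t0: "t \<ge> 0" unfolding t_def by simp
  have gk: "gamma_kr k \<rho> = iG * V" unfolding gamma_kr_eq iG_def V_def ..
  have "1 + t > 0" using t0 by simp
  note VB = V_bounds[OF rho this, of k, folded V_def]
  have "iG * 2 powr (- (2 * real k + (real k)\<^sup>2 * \<rho>\<^sup>2)) * real k powr (- ((real k)\<^sup>2 * \<rho>\<^sup>2))
      = iG * ((1/2) ^ k * (1/2) ^ k * ((2 * real k) powr (- \<rho>\<^sup>2)) ^ (k\<^sup>2))"
    unfolding Lo_eq[OF k] by (simp only: mult.assoc)
  also have "\<dots> \<le> iG * V" by (rule mult_left_mono[OF VB(1) iG0])
  finally show "inverse (Gamma (1 + \<rho>\<^sup>2) ^ (k\<^sup>2)) * 2 powr (- (2 * real k + (real k)\<^sup>2 * \<rho>\<^sup>2))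
              * real k powr (- ((real k)\<^sup>2 * \<rho>\<^sup>2)) \<le> gamma_kr k \<rho>" unfolding gk iG_def .
  have "iG * V \<le> iG * ((exp ((1 + t) - 1) / (1 + t)) ^ k * ((1 + t) powr (- \<rho>\<^sup>2) * Gamma (1 + \<rho>\<^sup>2)) ^ (k\<^sup>2))"
    by (rule mult_left_mono[OF VB(2) iG0])
  also have "\<dots> \<le> inverse (Gamma (1 + t) ^ k)"
    unfolding iG_def t_def by (rule upper_final[OF rho])
  finally show "gamma_kr k \<rho> \<le> inverse (Gamma (1 + real k * \<rho>\<^sup>2) ^ k)" unfolding gk t_def .
qed

lemma lnG_le:
  fixes s :: real assumes s: "s \<ge> 0"
  shows "ln (Gamma (1 + s)) \<le> s\<^sup>2"
proof -
  have G0: "Gamma (1 + s) > 0" by (rule Gamma_real_pos) (use s in simp)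
  have "ln (Gamma (1 + s)) \<le> ln ((s + 1) powr (s + 1) * exp (- s))"
    using Gamma_upper[OF s] G0 by simp
  also have "\<dots> = (s + 1) * ln (s + 1) - s"
    using s by (simp add: ln_mult)
  also have "\<dots> \<le> (s + 1) * s - s"
    using ln_add_one_self_le_self[OF s] s by (simp add: mult_left_mono add.commute)
  also have "\<dots> = s\<^sup>2" by (simp add: power2_eq_square algebra_simps)
  finally show ?thesis .
qed

lemma lnG_ge:
  fixes t :: real assumes t: "t > 0"
  shows "t * ln t - t \<le> ln (Gamma (1 + t))"
proof -
  have "ln (t powr t * exp (- t)) \<le> ln (Gamma (1 + t))"
    using Gamma_lower[of t] t by simp
  moreover have "ln (t powr t * exp (- t)) = t * ln t - t"
    using t by (simp add: ln_mult)
  ultimately show ?thesis by simp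
qed

lemma s_ln_bound:
  fixes s :: real assumes s: "s > 0"
  shows "s * (1 - ln s) \<le> 1"
proof -
  have "ln (1 / s) \<le> 1 / s - 1" using s by (intro ln_le_minus_one) simp
  hence "- ln s \<le> 1 / s - 1" using s by (simp add: ln_div)
  hence "s * (- ln s) \<le> s * (1 / s - 1)" using s by (intro mult_left_mono) auto
  thus ?thesis using s by (simp add: algebra_simps)
qed


lemma part2_single:
  fixes k :: nat and \<rho> R :: real
  assumes k: "k \<ge> 1" and rho: "0 < \<rho>" "\<rho> \<le> R"
  shows "\<bar>ln (gamma_kr k \<rho>) + (real k)\<^sup>2 * \<rho>\<^sup>2 * ln (real k)\<bar> \<le> (R ^ 4 + R\<^sup>2 + 3) * (real k)\<^sup>2"
proof -
  define kr where "kr = real k"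
  define s where "s = \<rho>\<^sup>2"
  define t where "t = kr * s"
  define G where "G = Gamma (1 + s)"
  define a where "a = kr\<^sup>2 * s * ln kr"
  have kr1: "kr \<ge> 1" unfolding kr_def using k by simp
  have s0: "s > 0" unfolding s_def using rho by simp
  have sR: "s \<le> R\<^sup>2" unfolding s_def using rho by (intro power_mono) auto
  have t0: "t > 0" unfolding t_def using kr1 s0 by simp
  have G0: "G > 0" unfolding G_def by (rule Gamma_real_pos) (use s0 in simp)
  have Gt0: "Gamma (1 + t) > 0" by (rule Gamma_real_pos) (use t0 in simp)
  define L where "L = inverse (G ^ (k\<^sup>2)) * 2 powr (- (2 * kr + kr\<^sup>2 * s)) * kr powr (- (kr\<^sup>2 * s))"
  have L0: "L > 0" unfolding L_def using G0 kr1 by simp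
  have P1: "L \<le> gamma_kr k \<rho>" "gamma_kr k \<rho> \<le> inverse (Gamma (1 + t) ^ k)"
    using part1[OF rho(1) k] unfolding L_def G_def kr_def s_def t_def by auto
  have g0: "gamma_kr k \<rho> > 0" using L0 P1(1) by linarith
  have lnL: "ln L = - (kr\<^sup>2 * ln G) - (2 * kr + kr\<^sup>2 * s) * ln 2 - kr\<^sup>2 * s * ln kr"
  proof -
    have "ln L = ln (inverse (G ^ (k\<^sup>2))) + ln (2 powr (- (2 * kr + kr\<^sup>2 * s))) + ln (kr powr (- (kr\<^sup>2 * s)))"
      unfolding L_def using G0 kr1 by (simp add: ln_mult)
    also have "ln (inverse (G ^ (k\<^sup>2))) = - (kr\<^sup>2 * ln G)"
      unfolding kr_def by (simp add: ln_inverse ln_realpow)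
    also have "ln (2 powr (- (2 * kr + kr\<^sup>2 * s))) = - (2 * kr + kr\<^sup>2 * s) * ln 2" by simp
    also have "ln (kr powr (- (kr\<^sup>2 * s))) = - (kr\<^sup>2 * s) * ln kr" by simp
    finally show ?thesis by (simp add: algebra_simps)
  qed
  have lo: "ln L \<le> ln (gamma_kr k \<rho>)" using P1(1) L0 by simp
  have up: "ln (gamma_kr k \<rho>) \<le> - (kr * ln (Gamma (1 + t)))"
  proof -
    have "ln (gamma_kr k \<rho>) \<le> ln (inverse (Gamma (1 + t) ^ k))" using P1(2) g0 Gt0 by (subst ln_le_cancel_iff) auto
    also have "\<dots> = - (kr * ln (Gamma (1 + t)))" unfolding kr_def by (simp add: ln_inverse ln_realpow)
    finally show ?thesis .
  qed
  define X where "X = ln (gamma_kr k \<rho>) + a"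
  have X_lower: "- ((R ^ 4 + R\<^sup>2 + 2) * kr\<^sup>2) \<le> X"
  proof -
    have l2: "ln (2::real) \<le> 1" "0 \<le> ln (2::real)" using ln_le_minus_one[of 2] by auto
    have "ln G \<le> s\<^sup>2" unfolding G_def by (rule lnG_le) (use s0 in simp)
    also have "s\<^sup>2 \<le> (R\<^sup>2)\<^sup>2" by (rule power_mono[OF sR]) (use s0 in simp)
    also have "(R\<^sup>2)\<^sup>2 = R ^ 4" by simp
    finally have lG: "ln G \<le> R ^ 4" .
    have k2: "kr \<le> kr\<^sup>2" using kr1 by (simp add: power2_eq_square)
    have e1: "kr\<^sup>2 * ln G \<le> kr\<^sup>2 * R ^ 4" by (rule mult_left_mono[OF lG]) simp
    have e2: "(2 * kr + kr\<^sup>2 * s) * ln 2 \<le> (2 * kr + kr\<^sup>2 * s) * 1"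
      by (rule mult_left_mono[OF l2(1)]) (use kr1 s0 in simp)
    have e3: "kr\<^sup>2 * s \<le> kr\<^sup>2 * R\<^sup>2" by (rule mult_left_mono[OF sR]) simp
    have "X \<ge> ln L + a" unfolding X_def using lo by simp
    moreover have "ln L + a = - (kr\<^sup>2 * ln G) - (2 * kr + kr\<^sup>2 * s) * ln 2"
      unfolding lnL a_def by simp
    moreover have "(R ^ 4 + R\<^sup>2 + 2) * kr\<^sup>2 = kr\<^sup>2 * R ^ 4 + kr\<^sup>2 * R\<^sup>2 + 2 * kr\<^sup>2"
      by (simp add: algebra_simps)
    moreover have "(2 * kr + kr\<^sup>2 * s) * 1 = 2 * kr + kr\<^sup>2 * s" by simp
    ultimately show ?thesis using e1 e2 e3 k2 by linarith
  qed
  have X_upper: "X \<le> kr\<^sup>2"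
  proof -
    have "kr * (t * ln t - t) \<le> kr * ln (Gamma (1 + t))"
      by (rule mult_left_mono[OF lnG_ge[OF t0]]) (use kr1 in simp)
    hence "X \<le> - (kr * (t * ln t - t)) + a" unfolding X_def using up by simp
    also have "- (kr * (t * ln t - t)) + a = kr\<^sup>2 * (s * (1 - ln s))"
    proof -
      have lt: "ln t = ln kr + ln s" unfolding t_def using kr1 s0 by (simp add: ln_mult)
      show ?thesis unfolding a_def lt unfolding t_def by (simp add: power2_eq_square algebra_simps)
    qed
    also have "\<dots> \<le> kr\<^sup>2 * 1" by (rule mult_left_mono[OF s_ln_bound[OF s0]]) simp
    finally show ?thesis by simp
  qed
  have R0: "0 \<le> R ^ 4 + R\<^sup>2" by simp
  have "\<bar>X\<bar> \<le> (R ^ 4 + R\<^sup>2 + 3) * kr\<^sup>2"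
  proof -
    have A: "0 \<le> (R ^ 4 + R\<^sup>2 + 2) * kr\<^sup>2" using R0 by simp
    have B: "(R ^ 4 + R\<^sup>2 + 3) * kr\<^sup>2 = (R ^ 4 + R\<^sup>2 + 2) * kr\<^sup>2 + kr\<^sup>2" by (simp add: algebra_simps)
    show ?thesis unfolding abs_le_iff B using X_lower X_upper A zero_le_power2[of kr] by (intro conjI) linarith+
  qed
  thus ?thesis unfolding X_def a_def kr_def s_def by simp
qed

theorem lemma10:
  shows "(\<forall>(k::nat) (\<rho>::real). \<rho> > 0 \<longrightarrow> k \<ge> 1 \<longrightarrow>
            inverse (Gamma (1 + \<rho>\<^sup>2) ^ (k\<^sup>2)) * 2 powr (- (2 * real k + (real k)\<^sup>2 * \<rho>\<^sup>2))
              * real k powr (- ((real k)\<^sup>2 * \<rho>\<^sup>2)) \<le> gamma_kr k \<rho>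
          \<and> gamma_kr k \<rho> \<le> inverse (Gamma (1 + real k * \<rho>\<^sup>2) ^ k))
       \<and> (\<forall>R>0. \<exists>C. \<forall>(k::nat) (\<rho>::real). k \<ge> 1 \<longrightarrow> 0 < \<rho> \<longrightarrow> \<rho> \<le> R \<longrightarrow>
            \<bar>ln (gamma_kr k \<rho>) + (real k)\<^sup>2 * \<rho>\<^sup>2 * ln (real k)\<bar> \<le> C * (real k)\<^sup>2)"
proof (intro conjI allI impI)
  fix k :: nat and \<rho> :: real
  assume "\<rho> > 0" "k \<ge> 1"
  from part1[OF this] show "inverse (Gamma (1 + \<rho>\<^sup>2) ^ (k\<^sup>2)) * 2 powr (- (2 * real k + (real k)\<^sup>2 * \<rho>\<^sup>2))
              * real k powr (- ((real k)\<^sup>2 * \<rho>\<^sup>2)) \<le> gamma_kr k \<rho>"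
    and "gamma_kr k \<rho> \<le> inverse (Gamma (1 + real k * \<rho>\<^sup>2) ^ k)" by auto
next
  fix R :: real assume "R > 0"
  show "\<exists>C. \<forall>(k::nat) (\<rho>::real). k \<ge> 1 \<longrightarrow> 0 < \<rho> \<longrightarrow> \<rho> \<le> R \<longrightarrow>
            \<bar>ln (gamma_kr k \<rho>) + (real k)\<^sup>2 * \<rho>\<^sup>2 * ln (real k)\<bar> \<le> C * (real k)\<^sup>2"
    using part2_single by blast
qed

end
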